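(* Let $p(z)=z^n+a_nz^{n-1}+\cdots+a_2z+a_1$ be a complex monic polynomial with $n\geq2$ and $a_1\neq0$. If $z\in\mathbb{C}$ is any zero of $p$, then $$|z|\leq\left\{\frac{1}{2}\left(\delta_1+\delta+\sqrt{(\delta_1-\delta)^2+4\delta_2}\right)+1\right\}^{1/8}.$$
   Context: Let $C_p$ be the $n\times n$ matrix whose first row is $(-a_n,-a_{n-1},\dots,-a_2,-a_1)$, whose entries $(k+1,k)$ equal $1$ for $k=1,\dots,n-1$, and whose other entries are $0$. Define numbers $b_j,c_j,d_j$ ($j=1,\dots,n$) by: the first row of $C_p^2$ is $(b_n,b_{n-1},\dots,b_1)$, the first row of $C_p^3$ is $(c_n,\dots,c_1)$, the first row of $C_p^4$ is $(d_n,\dots,d_1)$ (so $b_j=a_na_j-a_{j-1}$, $c_j=-a_nb_j+a_{n-1}a_j-a_{j-2}$ with $a_0=a_{-1}=0$). Set $\alpha=\sum_{j=1}^n|a_j|^2$, $\beta=\sum_{j=1}^n|b_j|^2$, $\gamma=-\sum_{j=1}^n b_j\overline{a_j}$, $\delta=\frac{1}{2}\left(\alpha+\beta+\sqrt{(\alpha-\beta)^2+4|\gamma|^2}\right)$; $\alpha_1=\sum_{j=1}^n|d_j|^2$, $\beta_1=\sum_{j=1}^n|c_j|^2$, $\gamma_1=\sum_{j=1}^n d_j\overline{c_j}$, $\delta_1=\frac12\left(\alpha_1+\beta_1+\sqrt{(\alpha_1-\beta_1)^2+4|\gamma_1|^2}\right)$; $\gamma_2=\sum_{j=1}^n d_j\overline{b_j}$,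 $\gamma_3=\sum_{j=1}^n d_j\overline{a_j}$, $\gamma_4=\sum_{j=1}^n c_j\overline{b_j}$, $\gamma_5=\sum_{j=1}^n c_j\overline{a_j}$, and $\delta_2=\frac12\Big(|\gamma_2|^2+|\gamma_3|^2+|\gamma_4|^2+|\gamma_5|^2+\sqrt{\big((|\gamma_2|^2+|\gamma_3|^2)-(|\gamma_4|^2+|\gamma_5|^2)\big)^2+4|\gamma_2\overline{\gamma_4}+\gamma_3\overline{\gamma_5}|^2}\Big)$. *)

theory Defs
  imports "HOL-Analysis.Analysis"
begin

(* n x n matrices with 1-based indices, represented as functions nat => nat => complex;
   only entries with indices in {1..n} are meaningful. *)

definition companion :: "nat \<Rightarrow> (nat \<Rightarrow> complex) \<Rightarrow> nat \<Rightarrow> nat \<Rightarrow> complex" where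
  "companion n a i k =
     (if i = 1 then - a (n + 1 - k) else if i = k + 1 then 1 else 0)"

definition mmul :: "nat \<Rightarrow> (nat \<Rightarrow> nat \<Rightarrow> complex) \<Rightarrow> (nat \<Rightarrow> nat \<Rightarrow> complex) \<Rightarrow> nat \<Rightarrow> nat \<Rightarrow> complex" where
  "mmul n A B i j = (\<Sum>k=1..n. A i k * B k j)"

fun mpow :: "nat \<Rightarrow> (nat \<Rightarrow> nat \<Rightarrow> complex) \<Rightarrow> nat \<Rightarrow> nat \<Rightarrow> nat \<Rightarrow> complex" where
  "mpow n A 0 = (\<lambda>i j. if i = j then 1 else 0)"
| "mpow n A (Suc m) = mmul n (mpow n A m) A"

(* first row of C_p^m is (x_n, ..., x_1), i.e. x_j = (C_p^m)(1, n+1-j) *)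
definition rowcoef :: "nat \<Rightarrow> (nat \<Rightarrow> complex) \<Rightarrow> nat \<Rightarrow> nat \<Rightarrow> complex" where
  "rowcoef n a m j = mpow n (companion n a) m 1 (n + 1 - j)"

definition bco where "bco n a = rowcoef n a 2"
definition cco where "cco n a = rowcoef n a 3"
definition dco where "dco n a = rowcoef n a 4"

definition alpha :: "nat \<Rightarrow> (nat \<Rightarrow> complex) \<Rightarrow> real" where
  "alpha n a = (\<Sum>j=1..n. (cmod (a j))^2)"
definition beta :: "nat \<Rightarrow> (nat \<Rightarrow> complex) \<Rightarrow> real" where
  "beta n a = (\<Sum>j=1..n. (cmod (bco n a j))^2)"
definition gamma :: "nat \<Rightarrow> (nat \<Rightarrow> complex) \<Rightarrow> complex" where
  "gamma n a = - (\<Sum>j=1..n. bco n a j * cnj (a j))"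
definition delta :: "nat \<Rightarrow> (nat \<Rightarrow> complex) \<Rightarrow> real" where
  "delta n a = (alpha n a + beta n a
      + sqrt ((alpha n a - beta n a)^2 + 4 * (cmod (gamma n a))^2)) / 2"

definition alpha1 :: "nat \<Rightarrow> (nat \<Rightarrow> complex) \<Rightarrow> real" where
  "alpha1 n a = (\<Sum>j=1..n. (cmod (dco n a j))^2)"
definition beta1 :: "nat \<Rightarrow> (nat \<Rightarrow> complex) \<Rightarrow> real" where
  "beta1 n a = (\<Sum>j=1..n. (cmod (cco n a j))^2)"
definition gamma1 :: "nat \<Rightarrow> (nat \<Rightarrow> complex) \<Rightarrow> complex" where
  "gamma1 n a = (\<Sum>j=1..n. dco n a j * cnj (cco n a j))"
definition delta1 :: "nat \<Rightarrow> (nat \<Rightarrow> complex) \<Rightarrow> real" where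
  "delta1 n a = (alpha1 n a + beta1 n a
      + sqrt ((alpha1 n a - beta1 n a)^2 + 4 * (cmod (gamma1 n a))^2)) / 2"

definition gamma2 :: "nat \<Rightarrow> (nat \<Rightarrow> complex) \<Rightarrow> complex" where
  "gamma2 n a = (\<Sum>j=1..n. dco n a j * cnj (bco n a j))"
definition gamma3 :: "nat \<Rightarrow> (nat \<Rightarrow> complex) \<Rightarrow> complex" where
  "gamma3 n a = (\<Sum>j=1..n. dco n a j * cnj (a j))"
definition gamma4 :: "nat \<Rightarrow> (nat \<Rightarrow> complex) \<Rightarrow> complex" where
  "gamma4 n a = (\<Sum>j=1..n. cco n a j * cnj (bco n a j))"
definition gamma5 :: "nat \<Rightarrow> (nat \<Rightarrow> complex) \<Rightarrow> complex" where
  "gamma5 n a = (\<Sum>j=1..n. cco n a j * cnj (a j))"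

definition delta2 :: "nat \<Rightarrow> (nat \<Rightarrow> complex) \<Rightarrow> real" where
  "delta2 n a =
    (let g2 = (cmod (gamma2 n a))^2; g3 = (cmod (gamma3 n a))^2;
         g4 = (cmod (gamma4 n a))^2; g5 = (cmod (gamma5 n a))^2
     in (g2 + g3 + g4 + g5
         + sqrt (((g2 + g3) - (g4 + g5))^2
                 + 4 * (cmod (gamma2 n a * cnj (gamma4 n a) + gamma3 n a * cnj (gamma5 n a)))^2)) / 2)"

end

theory Submission
  imports Defs
begin

definition lam :: "real \<Rightarrow> real \<Rightarrow> real \<Rightarrow> real" where
  "lam x y g = (x + y + sqrt ((x - y)^2 + 4 * g^2)) / 2"

lemma lam_ge: "max x y \<le> lam x y g"
proof -
  have "\<bar>x - y\<bar> \<le> sqrt ((x - y)^2 + 4 * g^2)"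
  proof -
    have "sqrt ((x - y)^2) \<le> sqrt ((x - y)^2 + 4 * g^2)" by (rule real_sqrt_le_mono) simp
    thus ?thesis by simp
  qed
  thus ?thesis unfolding lam_def by (auto simp: abs_if split: if_splits)
qed

lemma lam_sym: "lam x y g = lam y x g"
  unfolding lam_def by (simp add: power2_commute add.commute)

lemma real2:
  fixes x y g P Q :: real
  assumes "g \<ge> 0"
  shows "x * P^2 + y * Q^2 + 2 * g * P * Q \<le> lam x y g * (P^2 + Q^2)"
proof -
  define s where "s = sqrt ((x - y)^2 + 4 * g^2)"
  have s2: "s^2 = (x - y)^2 + 4 * g^2" unfolding s_def by simp
  have sge: "\<bar>x - y\<bar> \<le> s"
  proof -
    have "sqrt ((x - y)^2) \<le> sqrt ((x - y)^2 + 4 * g^2)" by (rule real_sqrt_le_mono) simp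
    thus ?thesis unfolding s_def by simp
  qed
  define a' where "a' = (y - x + s) / 2"
  define b' where "b' = (x - y + s) / 2"
  have a0: "a' \<ge> 0" "b' \<ge> 0" using sge unfolding a'_def b'_def by auto
  have ab: "a' * b' = g^2" unfolding a'_def b'_def using s2 by (simp add: algebra_simps power2_eq_square)
  have key: "a' * P^2 + b' * Q^2 - 2 * g * P * Q \<ge> 0"
  proof (cases "a' = 0")
    case True
    then have "g = 0" using ab assms by simp
    then show ?thesis using True a0 by simp
  next
    case False
    then have ap: "a' > 0" using a0 by simp
    have "a' * (a' * P^2 + b' * Q^2 - 2 * g * P * Q) = (a' * P - g * Q)^2"
      using ab by (simp add: algebra_simps power2_eq_square)
    also have "\<dots> \<ge> 0" by simp
    finally show ?thesis using ap by (simp add: zero_le_mult_iff)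
  qed
  have "lam x y g = x + a'" "lam x y g = y + b'" unfolding lam_def a'_def b'_def s_def by (simp_all add: field_simps)
  then have "lam x y g * (P^2 + Q^2) = (x + a') * P^2 + (y + b') * Q^2"
    by (metis distrib_left mult.commute)
  then show ?thesis using key by (simp add: algebra_simps)
qed

lemma complex2:
  fixes x y :: real and c p q :: complex
  shows "x * (cmod p)^2 + y * (cmod q)^2 + 2 * Re (c * cnj p * q) \<le> lam x y (cmod c) * ((cmod p)^2 + (cmod q)^2)"
proof -
  have "Re (c * cnj p * q) \<le> cmod c * cmod p * cmod q"
    by (metis complex_Re_le_cmod complex_mod_cnj norm_mult)
  then show ?thesis using real2[of "cmod c" x "cmod p" y "cmod q"] by simp
qed

lemma cmod_add_sq: "(cmod (a + b))^2 = (cmod a)^2 + (cmod b)^2 + 2 * Re (a * cnj b)"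
  unfolding cmod_power2 by (simp add: power2_eq_square algebra_simps)

lemma pair_sum:
  fixes r s :: "nat \<Rightarrow> complex"
  shows "(\<Sum>j\<in>I. (cmod (r j * p + s j * q))^2) = (\<Sum>j\<in>I. (cmod (r j))^2) * (cmod p)^2
     + (\<Sum>j\<in>I. (cmod (s j))^2) * (cmod q)^2 + 2 * Re ((\<Sum>j\<in>I. r j * cnj (s j)) * p * cnj q)"
proof -
  have "(\<Sum>j\<in>I. (cmod (r j * p + s j * q))^2) = (\<Sum>j\<in>I. (cmod (r j))^2 * (cmod p)^2
     + (cmod (s j))^2 * (cmod q)^2 + 2 * Re (r j * cnj (s j) * p * cnj q))"
    by (rule sum.cong) (simp_all add: cmod_add_sq norm_mult power_mult_distrib mult_ac)
  also have "\<dots> = (\<Sum>j\<in>I. (cmod (r j))^2) * (cmod p)^2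
     + (\<Sum>j\<in>I. (cmod (s j))^2) * (cmod q)^2 + 2 * Re ((\<Sum>j\<in>I. r j * cnj (s j)) * p * cnj q)"
    by (simp add: sum.distrib sum_distrib_left sum_distrib_right mult.assoc)
  finally show ?thesis .
qed

lemma cs2: fixes a b c d :: real shows "(a * b + c * d)^2 \<le> (a^2 + c^2) * (b^2 + d^2)"
proof -
  have "0 \<le> (a * d - b * c)^2" by simp
  then show ?thesis by (simp add: power2_eq_square algebra_simps)
qed

lemma quad:
  fixes r1 r2 r3 r4 u :: "nat \<Rightarrow> complex" and I :: "nat set"
  defines "x1 \<equiv> \<Sum>j\<in>I. r1 j * u j" and "x2 \<equiv> \<Sum>j\<in>I. r2 j * u j"
    and "x3 \<equiv> \<Sum>j\<in>I. r3 j * u j" and "x4 \<equiv> \<Sum>j\<in>I. r4 j * u j"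
    and "A1 \<equiv> \<Sum>j\<in>I. (cmod (r1 j))^2" and "B1 \<equiv> \<Sum>j\<in>I. (cmod (r2 j))^2"
    and "C1 \<equiv> \<Sum>j\<in>I. r1 j * cnj (r2 j)"
    and "A0 \<equiv> \<Sum>j\<in>I. (cmod (r4 j))^2" and "B0 \<equiv> \<Sum>j\<in>I. (cmod (r3 j))^2"
    and "C0 \<equiv> \<Sum>j\<in>I. r3 j * cnj (r4 j)"
    and "g2 \<equiv> \<Sum>j\<in>I. r1 j * cnj (r3 j)" and "g3 \<equiv> \<Sum>j\<in>I. r1 j * cnj (r4 j)"
    and "g4 \<equiv> \<Sum>j\<in>I. r2 j * cnj (r3 j)" and "g5 \<equiv> \<Sum>j\<in>I. r2 j * cnj (r4 j)"
  shows "(cmod x1)^2 + (cmod x2)^2 + (cmod x3)^2 + (cmod x4)^2 \<le>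
     lam (lam A1 B1 (cmod C1)) (lam A0 B0 (cmod C0))
       (sqrt (lam ((cmod g2)^2 + (cmod g3)^2) ((cmod g4)^2 + (cmod g5)^2) (cmod (g2 * cnj g4 + g3 * cnj g5))))
     * (\<Sum>j\<in>I. (cmod (u j))^2)"
proof -
  define d1 where "d1 = lam A1 B1 (cmod C1)"
  define d0 where "d0 = lam A0 B0 (cmod C0)"
  define dd2 where "dd2 = lam ((cmod g2)^2 + (cmod g3)^2) ((cmod g4)^2 + (cmod g5)^2) (cmod (g2 * cnj g4 + g3 * cnj g5))"
  define L where "L = lam d1 d0 (sqrt dd2)"
  define U where "U = (\<Sum>j\<in>I. (cmod (u j))^2)"
  define s1 where "s1 = (cmod x1)^2 + (cmod x2)^2"
  define s2 where "s2 = (cmod x3)^2 + (cmod x4)^2"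
  define S where "S = s1 + s2"
  define W12 where "W12 j = r1 j * cnj x1 + r2 j * cnj x2" for j
  define W34 where "W34 j = r3 j * cnj x3 + r4 j * cnj x4" for j
  define T where "T = (\<Sum>j\<in>I. (cmod (W12 j + W34 j))^2)"
  have s1p: "s1 \<ge> 0" and s2p: "s2 \<ge> 0" unfolding s1_def s2_def by simp_all
  have A1p: "A1 \<ge> 0" unfolding A1_def by (simp add: sum_nonneg)
  have d1p: "d1 \<ge> 0" using lam_ge[of A1 B1 "cmod C1"] A1p unfolding d1_def by linarith
  have dd2p: "dd2 \<ge> 0" using lam_ge[of "(cmod g2)^2 + (cmod g3)^2" "(cmod g4)^2 + (cmod g5)^2" "cmod (g2 * cnj g4 + g3 * cnj g5)"]
    unfolding dd2_def by (smt (verit) zero_le_power2)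
  have Lp: "L \<ge> 0" using lam_ge[of d1 d0 "sqrt dd2"] d1p unfolding L_def by linarith
  have hS: "complex_of_real S = (\<Sum>j\<in>I. u j * (W12 j + W34 j))"
  proof -
    have "(\<Sum>j\<in>I. u j * (W12 j + W34 j)) = (\<Sum>j\<in>I. r1 j * u j) * cnj x1 + (\<Sum>j\<in>I. r2 j * u j) * cnj x2
        + (\<Sum>j\<in>I. r3 j * u j) * cnj x3 + (\<Sum>j\<in>I. r4 j * u j) * cnj x4"
      unfolding W12_def W34_def
      by (simp add: sum.distrib sum_distrib_left sum_distrib_right algebra_simps)
    also have "\<dots> = x1 * cnj x1 + x2 * cnj x2 + x3 * cnj x3 + x4 * cnj x4"
      unfolding x1_def[symmetric] x2_def[symmetric] x3_def[symmetric] x4_def[symmetric] by (simp add: mult.commute)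
    also have "\<dots> = complex_of_real S" unfolding S_def s1_def s2_def
      by (simp only: complex_norm_square[symmetric] of_real_add add.assoc)
    finally show ?thesis by simp
  qed
  have hCS: "S^2 \<le> U * T"
  proof -
    have "S = cmod (complex_of_real S)" using s1p s2p unfolding S_def by (simp only: norm_of_real)
    also have "\<dots> \<le> (\<Sum>j\<in>I. cmod (u j) * cmod (W12 j + W34 j))"
      unfolding hS by (metis (no_types, lifting) norm_mult norm_sum sum.cong)
    finally have "S \<le> \<dots>" .
    then have "S^2 \<le> (\<Sum>j\<in>I. cmod (u j) * cmod (W12 j + W34 j))^2"
      using s1p s2p unfolding S_def by (intro power_mono) auto
    also have "\<dots> \<le> U * T" unfolding U_def T_def by (rule Cauchy_Schwarz_ineq_sum)
    finally show ?thesis .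
  qed
  have hT: "T = (\<Sum>j\<in>I. (cmod (W12 j))^2) + (\<Sum>j\<in>I. (cmod (W34 j))^2)
      + 2 * Re (\<Sum>j\<in>I. W12 j * cnj (W34 j))"
    unfolding T_def by (simp add: cmod_add_sq sum.distrib sum_distrib_left)
  have T12: "(\<Sum>j\<in>I. (cmod (W12 j))^2) \<le> d1 * s1"
  proof -
    have "(\<Sum>j\<in>I. (cmod (W12 j))^2) = A1 * (cmod x1)^2 + B1 * (cmod x2)^2 + 2 * Re (C1 * cnj x1 * x2)"
      unfolding W12_def A1_def B1_def C1_def by (subst pair_sum) simp
    also have "\<dots> \<le> d1 * s1" unfolding d1_def s1_def by (rule complex2)
    finally show ?thesis .
  qed
  have T34: "(\<Sum>j\<in>I. (cmod (W34 j))^2) \<le> d0 * s2"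
  proof -
    have "(\<Sum>j\<in>I. (cmod (W34 j))^2) = B0 * (cmod x3)^2 + A0 * (cmod x4)^2 + 2 * Re (C0 * cnj x3 * x4)"
      unfolding W34_def A0_def B0_def C0_def by (subst pair_sum) simp
    also have "\<dots> \<le> lam B0 A0 (cmod C0) * s2" unfolding s2_def by (rule complex2)
    finally show ?thesis unfolding d0_def using lam_sym by metis
  qed
  define e1 where "e1 = cnj g2 * x1 + cnj g4 * x2"
  define e2 where "e2 = cnj g3 * x1 + cnj g5 * x2"
  have hX: "(\<Sum>j\<in>I. W12 j * cnj (W34 j)) = x3 * cnj e1 + x4 * cnj e2"
    unfolding W12_def W34_def e1_def e2_def g2_def g3_def g4_def g5_def
    by (simp add: sum.distrib sum_distrib_left sum_distrib_right algebra_simps)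
  have hE: "(cmod e1)^2 + (cmod e2)^2 \<le> dd2 * s1"
  proof -
    have "(cmod e1)^2 + (cmod e2)^2 = ((cmod g2)^2 + (cmod g3)^2) * (cmod x1)^2
       + ((cmod g4)^2 + (cmod g5)^2) * (cmod x2)^2 + 2 * Re ((g2 * cnj g4 + g3 * cnj g5) * cnj x1 * x2)"
    proof -
      have r: "Re (cnj g2 * x1 * cnj (cnj g4 * x2)) + Re (cnj g3 * x1 * cnj (cnj g5 * x2))
          = Re ((g2 * cnj g4 + g3 * cnj g5) * cnj x1 * x2)"
      proof -
        have "cnj g2 * x1 * cnj (cnj g4 * x2) + cnj g3 * x1 * cnj (cnj g5 * x2)
           = cnj ((g2 * cnj g4 + g3 * cnj g5) * cnj x1 * x2)" by (simp add: algebra_simps)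
        then show ?thesis by (metis cnj.sel(1) plus_complex.sel(1))
      qed
      show ?thesis unfolding e1_def e2_def cmod_add_sq using r
        by (simp add: norm_mult power_mult_distrib algebra_simps)
    qed
    also have "\<dots> \<le> dd2 * s1" unfolding dd2_def s1_def by (rule complex2)
    finally show ?thesis .
  qed
  have hR: "Re (\<Sum>j\<in>I. W12 j * cnj (W34 j)) \<le> sqrt dd2 * sqrt s1 * sqrt s2"
  proof -
    have "Re (\<Sum>j\<in>I. W12 j * cnj (W34 j)) \<le> cmod (x3 * cnj e1 + x4 * cnj e2)"
      unfolding hX by (rule complex_Re_le_cmod)
    also have "\<dots> \<le> cmod x3 * cmod e1 + cmod x4 * cmod e2"
      by (metis complex_mod_cnj norm_mult norm_triangle_ineq)
    also have "\<dots> \<le> sqrt (s2 * ((cmod e1)^2 + (cmod e2)^2))"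
      unfolding s2_def by (rule real_le_rsqrt) (rule cs2)
    also have "\<dots> \<le> sqrt (s2 * (dd2 * s1))"
      using hE s2p by (intro real_sqrt_le_mono mult_left_mono) auto
    also have "\<dots> = sqrt dd2 * sqrt s1 * sqrt s2" by (simp add: real_sqrt_mult)
    finally show ?thesis .
  qed
  have hTL: "T \<le> L * S"
  proof -
    have "T \<le> d1 * (sqrt s1)^2 + d0 * (sqrt s2)^2 + 2 * sqrt dd2 * sqrt s1 * sqrt s2"
      using hT T12 T34 hR s1p s2p by simp
    also have "\<dots> \<le> L * ((sqrt s1)^2 + (sqrt s2)^2)" unfolding L_def
      by (rule real2) (simp add: dd2p)
    finally show ?thesis using s1p s2p unfolding S_def by simp
  qed
  have "S \<le> L * U"
  proof (cases "S = 0")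
    case True
    have "U \<ge> 0" unfolding U_def by (simp add: sum_nonneg)
    then show ?thesis using True Lp by simp
  next
    case False
    then have Sp: "S > 0" using s1p s2p unfolding S_def by simp
    have "S * S \<le> (L * U) * S" using hCS hTL
      by (smt (verit, ccfv_SIG) Sp U_def mult.commute mult_left_mono power2_eq_square sum_nonneg zero_le_power2 mult.assoc)
    then show ?thesis using Sp by simp
  qed
  then show ?thesis unfolding S_def s1_def s2_def L_def U_def d1_def d0_def dd2_def by simp
qed


lemma delta1:
  fixes n :: nat assumes "n \<ge> 1"
  shows "(\<Sum>l=1..n. (if 1 = l then 1 else 0) * (f l :: complex)) = f 1"
proof -
  have "(\<Sum>l=1..n. (if 1 = l then 1 else 0) * f l) = (\<Sum>l=1..n. if l = 1 then f l else 0)"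
    by (rule sum.cong) auto
  also have "\<dots> = f 1" using assms by (simp only: sum.delta[OF finite_atLeastAtMost]) simp
  finally show ?thesis .
qed

lemma C_eig:
  assumes p: "z ^ n + (\<Sum>j=1..n. a j * z ^ (j - 1)) = 0" and l: "l \<in> {1..n}"
  shows "(\<Sum>k=1..n. companion n a l k * z ^ (n - k)) = z * z ^ (n - l)"
proof (cases "l = 1")
  case True
  have "(\<Sum>k=1..n. companion n a l k * z ^ (n - k)) = (\<Sum>k=1..n. - a (n + 1 - k) * z ^ (n - k))"
    using True by (simp add: companion_def)
  also have "\<dots> = (\<Sum>k=1..n. - a (n + 1 - (n + 1 - k)) * z ^ (n - (n + 1 - k)))"
    by (subst sum.atLeastAtMost_rev) simp
  also have "\<dots> = (\<Sum>k=1..n. - (a k * z ^ (k - 1)))"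
    by (rule sum.cong) auto
  also have "\<dots> = z ^ n" using eq_neg_iff_add_eq_0[THEN iffD2, OF p] by (simp add: sum_negf)
  also have "\<dots> = z * z ^ (n - l)" using True l by (simp add: power_Suc[symmetric])
  finally show ?thesis .
next
  case False
  then have l2: "l \<ge> 2" using l by auto
  have "(\<Sum>k=1..n. companion n a l k * z ^ (n - k)) = (\<Sum>k=1..n. if k = l - 1 then z ^ (n - k) else 0)"
    using False by (intro sum.cong) (auto simp: companion_def)
  also have "\<dots> = z ^ (n - (l - 1))"
  proof -
    have "l - 1 \<in> {1..n}" using l l2 by auto
    then show ?thesis by (simp only: sum.delta[OF finite_atLeastAtMost]) simp
  qed
  also have "\<dots> = z * z ^ (n - l)"
  proof -
    have "n - (l - 1) = Suc (n - l)" using l l2 by auto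
    then show ?thesis by simp
  qed
  finally show ?thesis .
qed


lemma row_eig:
  assumes p: "z ^ n + (\<Sum>j=1..n. a j * z ^ (j - 1)) = 0" and n: "n \<ge> 1"
  shows "(\<Sum>k=1..n. mpow n (companion n a) m 1 k * z ^ (n - k)) = z ^ m * z ^ (n - 1)"
proof (induction m)
  case 0
  show ?case using delta1[OF n, of "\<lambda>k. z ^ (n - k)"] by simp
next
  case (Suc m)
  let ?f = "\<lambda>l. mpow n (companion n a) m 1 l"
  have "(\<Sum>k=1..n. mpow n (companion n a) (Suc m) 1 k * z ^ (n - k))
      = (\<Sum>k=1..n. \<Sum>l=1..n. ?f l * companion n a l k * z ^ (n - k))"
    by (simp add: mmul_def sum_distrib_right)
  also have "\<dots> = (\<Sum>l=1..n. ?f l * (\<Sum>k=1..n. companion n a l k * z ^ (n - k)))"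
    by (subst sum.swap) (simp add: sum_distrib_left mult.assoc)
  also have "\<dots> = (\<Sum>l=1..n. ?f l * (z * z ^ (n - l)))"
  proof (rule sum.cong[OF refl])
    fix l assume "l \<in> {1..n}"
    then show "?f l * (\<Sum>k=1..n. companion n a l k * z ^ (n - k)) = ?f l * (z * z ^ (n - l))"
      by (simp only: C_eig[OF p])
  qed
  also have "\<dots> = z * (\<Sum>l=1..n. ?f l * z ^ (n - l))"
    by (simp add: sum_distrib_left mult_ac)
  also have "\<dots> = z ^ Suc m * z ^ (n - 1)" using Suc.IH by simp
  finally show ?case .
qed

lemma rowcoef_eig:
  assumes p: "z ^ n + (\<Sum>j=1..n. a j * z ^ (j - 1)) = 0" and n: "n \<ge> 1"
  shows "(\<Sum>j=1..n. rowcoef n a m j * z ^ (j - 1)) = z ^ m * z ^ (n - 1)"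
proof -
  have "(\<Sum>j=1..n. rowcoef n a m j * z ^ (j - 1))
     = (\<Sum>j=1..n. mpow n (companion n a) m 1 (n + 1 - (n + 1 - j)) * z ^ (n + 1 - j - 1))"
    by (subst sum.atLeastAtMost_rev) (simp add: rowcoef_def)
  also have "\<dots> = (\<Sum>k=1..n. mpow n (companion n a) m 1 k * z ^ (n - k))"
    by (rule sum.cong) auto
  finally show ?thesis using row_eig[OF p n] by simp
qed

lemma rowcoef1:
  assumes "j \<in> {1..n}"
  shows "rowcoef n a 1 j = - a j"
proof -
  have "rowcoef n a 1 j = (\<Sum>l=1..n. (if 1 = l then 1 else 0) * companion n a l (n + 1 - j))"
    by (simp add: rowcoef_def mmul_def)
  also have "\<dots> = companion n a 1 (n + 1 - j)" using assms
    by (intro delta1) simp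
  also have "\<dots> = - a j" using assms by (simp add: companion_def)
  finally show ?thesis .
qed

lemma geo_shift:
  fixes w :: real
  shows "(\<Sum>k<n. w ^ (k + 4)) + (1 + w + w^2 + w^3) = (\<Sum>k<n. w ^ k) + w^n + w^(n+1) + w^(n+2) + w^(n+3)"
  by (induction n) (simp_all add: power_add power2_eq_square power3_eq_cube algebra_simps)


theorem mainTheorem14:
  fixes n :: nat and a :: "nat \<Rightarrow> complex" and z :: complex
  assumes "n \<ge> 2" and "a 1 \<noteq> 0"
    and "z ^ n + (\<Sum>j=1..n. a j * z ^ (j - 1)) = 0"
  shows "cmod z \<le> ((delta1 n a + delta n a
            + sqrt ((delta1 n a - delta n a)^2 + 4 * delta2 n a)) / 2 + 1) powr (1/8)"
proof -
  have n1: "n \<ge> 1" using assms(1) by simp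
  note p = assms(3)
  define u where "u j = z ^ (j - 1)" for j
  define I where "I = {1..n::nat}"
  define x1 where "x1 = (\<Sum>j\<in>I. dco n a j * u j)"
  define x2 where "x2 = (\<Sum>j\<in>I. cco n a j * u j)"
  define x3 where "x3 = (\<Sum>j\<in>I. bco n a j * u j)"
  define x4 where "x4 = (\<Sum>j\<in>I. - a j * u j)"
  define w where "w = (cmod z)^2"
  have w0: "w \<ge> 0" unfolding w_def by simp
  have cx: "(cmod (z ^ m * z ^ (n - 1)))^2 = w ^ (m + (n - 1))" for m
    unfolding w_def by (simp add: norm_mult norm_power power_add power_mult_distrib power_mult[symmetric] mult.commute)
  have e1: "(cmod x1)^2 = w ^ (n + 3)"
    using rowcoef_eig[OF p n1, of 4] cx[of 4] n1 unfolding x1_def I_def u_def dco_def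
    by (simp add: add.commute)
  have e2: "(cmod x2)^2 = w ^ (n + 2)"
    using rowcoef_eig[OF p n1, of 3] cx[of 3] n1 unfolding x2_def I_def u_def cco_def
    by (simp add: add.commute)
  have e3: "(cmod x3)^2 = w ^ (n + 1)"
    using rowcoef_eig[OF p n1, of 2] cx[of 2] n1 unfolding x3_def I_def u_def bco_def
    by (simp add: add.commute)
  have e4: "(cmod x4)^2 = w ^ n"
  proof -
    have "x4 = (\<Sum>j=1..n. rowcoef n a 1 j * z ^ (j - 1))"
      unfolding x4_def I_def u_def
    proof (rule sum.cong[OF refl])
      fix j assume "j \<in> {1..n}"
      from rowcoef1[OF this, of a] show "- a j * z ^ (j - 1) = rowcoef n a 1 j * z ^ (j - 1)" by simp
    qed
    then have "x4 = z ^ 1 * z ^ (n - 1)" using rowcoef_eig[OF p n1, of 1] by simp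
    then show ?thesis using cx[of 1] n1 by simp
  qed
  define U where "U = (\<Sum>j\<in>I. (cmod (u j))^2)"
  have hU: "U = (\<Sum>k<n. w ^ k)"
  proof -
    have "U = (\<Sum>j\<in>{Suc 0..n}. w ^ (j - 1))" unfolding U_def I_def u_def w_def
      by (intro sum.cong) (simp_all add: norm_power power_mult[symmetric] mult.commute)
    also have "\<dots> = (\<Sum>k<n. w ^ k)" by (subst sum.atLeast1_atMost_eq) simp
    finally show ?thesis .
  qed
  have Upos: "U \<ge> 1"
  proof -
    have "(\<Sum>k<n. w ^ k) = w ^ 0 + (\<Sum>k\<in>{..<n} - {0}. w ^ k)" using n1
      by (subst sum.remove[of _ 0]) auto
    moreover have "(\<Sum>k\<in>{..<n} - {0}. w ^ k) \<ge> 0" using w0 by (simp add: sum_nonneg)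
    ultimately show ?thesis using hU by simp
  qed
  define L1 where "L1 = lam (\<Sum>j\<in>I. (cmod (dco n a j))^2) (\<Sum>j\<in>I. (cmod (cco n a j))^2)
     (cmod (\<Sum>j\<in>I. dco n a j * cnj (cco n a j)))"
  define L0 where "L0 = lam (\<Sum>j\<in>I. (cmod (- a j))^2) (\<Sum>j\<in>I. (cmod (bco n a j))^2)
     (cmod (\<Sum>j\<in>I. bco n a j * cnj (- a j)))"
  define L2 where "L2 = lam ((cmod (\<Sum>j\<in>I. dco n a j * cnj (bco n a j)))^2 + (cmod (\<Sum>j\<in>I. dco n a j * cnj (- a j)))^2)
      ((cmod (\<Sum>j\<in>I. cco n a j * cnj (bco n a j)))^2 + (cmod (\<Sum>j\<in>I. cco n a j * cnj (- a j)))^2)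
      (cmod ((\<Sum>j\<in>I. dco n a j * cnj (bco n a j)) * cnj (\<Sum>j\<in>I. cco n a j * cnj (bco n a j))
         + (\<Sum>j\<in>I. dco n a j * cnj (- a j)) * cnj (\<Sum>j\<in>I. cco n a j * cnj (- a j))))"
  have q: "(cmod x1)^2 + (cmod x2)^2 + (cmod x3)^2 + (cmod x4)^2 \<le> lam L1 L0 (sqrt L2) * U"
    unfolding x1_def x2_def x3_def x4_def L1_def L0_def L2_def U_def
    by (rule quad[of "dco n a" u I "cco n a" "bco n a" "\<lambda>j. - a j"])
  have hL1: "L1 = delta1 n a"
    unfolding L1_def lam_def delta1_def alpha1_def beta1_def gamma1_def I_def ..
  have hL0: "L0 = delta n a"
    unfolding L0_def lam_def delta_def alpha_def beta_def gamma_def I_def by (simp add: sum_negf)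
  have hL2: "L2 = delta2 n a"
    unfolding L2_def lam_def delta2_def gamma2_def gamma3_def gamma4_def gamma5_def I_def Let_def
    by (simp add: sum_negf)
  have "0 \<le> L2" unfolding L2_def by (rule order_trans[OF _ lam_ge], rule order_trans[OF _ max.cobounded1]) simp
  then have L2p: "delta2 n a \<ge> 0" using hL2 by simp
  define R where "R = (delta1 n a + delta n a + sqrt ((delta1 n a - delta n a)^2 + 4 * delta2 n a)) / 2"
  have hR: "lam L1 L0 (sqrt L2) = R" unfolding R_def hL1 hL0 hL2 lam_def using L2p by simp
  have w4: "w^4 * U \<le> (R + 1) * U"
  proof -
    have "w^4 * U = (\<Sum>k<n. w ^ (k + 4))" unfolding hU sum_distrib_left by (simp add: power_add mult.commute)
    also have "\<dots> \<le> (\<Sum>k<n. w ^ (k + 4)) + (1 + w + w^2 + w^3)"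
    proof -
      have "0 \<le> 1 + w + w^2 + w^3" by (intro add_nonneg_nonneg) (simp_all add: w0)
      then show ?thesis by linarith
    qed
    also have "\<dots> = U + ((cmod x1)^2 + (cmod x2)^2 + (cmod x3)^2 + (cmod x4)^2)"
      unfolding geo_shift e1 e2 e3 e4 hU by (simp add: algebra_simps)
    also have "\<dots> \<le> U + R * U" using q hR by simp
    finally show ?thesis by (simp add: algebra_simps)
  qed
  then have w4': "w^4 \<le> R + 1" using Upos by simp
  show ?thesis
  proof (cases "z = 0")
    case True then show ?thesis by simp
  next
    case False
    then have zp: "cmod z > 0" by simp
    have wp: "w^4 > 0" unfolding w_def using zp by simp
    have "cmod z = root 8 (cmod z ^ 8)" using real_root_power_cancel[of 8 "cmod z"] by simp
    also have "cmod z ^ 8 = w ^ 4" unfolding w_def by (simp add: power_mult[symmetric])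
    also have "root 8 (w^4) \<le> root 8 (R + 1)" using w4' by (simp add: real_root_le_mono)
    also have "root 8 (R + 1) = (R + 1) powr (1/8)" using root_powr_inverse[of 8 "R + 1"] w4' wp by simp
    finally show ?thesis unfolding R_def .
  qed
qed
end
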